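(* Let $H$ be an NCI-hypergraph and let $e=\{x_1,\dots,x_n\}$ be a hyperedge of $H$. Then $N(x_1)=N(x_2)=\dots=N(x_n)$.
   Context: A simple hypergraph is a pair $H=(V,E)$, $V$ finite, $E\subseteq 2^V$, assumed minimal (no edge properly contains another); $2$-element edges are called edges and $k$-edges with $k\ge 3$ are called hyperedges. For $v\in V$, $N(v)=\{w:\{v,w\}\in E\}$ is its set of $2$-neighbors. The edge ideal $I(H)$ is the squarefree monomial ideal in $k[V]$ ($k$ a field) generated by $\prod_{v\in e}v$, $e\in E$. A nearly complete intersection is a squarefree monomial ideal $I$ that is not a complete intersection such that for every variable $x$ in the support of $I$, $I(x=1)$ (substituting $x=1$ in the generators) is a complete intersection. $H$ is an NCI-hypergraph if $I(H)$ is a nearly complete intersection. *)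

theory Defs
  imports Main
begin

(* A simple hypergraph (V,E): V finite, E a family of subsets of V, each edge has at
   least 2 elements (2-edges are "edges", k-edges with k>=3 are "hyperedges"),
   and E is a clutter (no edge properly contains another). *)
definition simple_hypergraph :: "'a set \<Rightarrow> 'a set set \<Rightarrow> bool" where
  "simple_hypergraph V E \<longleftrightarrow> finite V \<and> (\<forall>e\<in>E. e \<subseteq> V \<and> card e \<ge> 2)
     \<and> (\<forall>e\<in>E. \<forall>f\<in>E. \<not> f \<subset> e)"

definition nbrs :: "'a set set \<Rightarrow> 'a \<Rightarrow> 'a set" where
  "nbrs E v = {w. {v, w} \<in> E}"

(* A squarefree monomial ideal is represented by a finite family of supports of a
   monomial generating set: the set A stands for the monomial prod_{v in A} v. *)
definition minimal_sets :: "'a set set \<Rightarrow> 'a set set" where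
  "minimal_sets F = {A \<in> F. \<not> (\<exists>B\<in>F. B \<subset> A)}"

(* A squarefree monomial ideal is a complete intersection iff its minimal monomial
   generators have pairwise disjoint supports (pairwise coprime). *)
definition monomial_ci :: "'a set set \<Rightarrow> bool" where
  "monomial_ci F \<longleftrightarrow> pairwise disjnt (minimal_sets F)"

definition ideal_support :: "'a set set \<Rightarrow> 'a set" where
  "ideal_support F = \<Union>F"

(* I(x=1): substitute x = 1 in the generators *)
definition subst_one :: "'a set set \<Rightarrow> 'a \<Rightarrow> 'a set set" where
  "subst_one F x = (\<lambda>A. A - {x}) ` F"

definition nearly_ci :: "'a set set \<Rightarrow> bool" where
  "nearly_ci F \<longleftrightarrow> \<not> monomial_ci F \<and> (\<forall>x\<in>ideal_support F. monomial_ci (subst_one F x))"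

definition NCI_hypergraph :: "'a set \<Rightarrow> 'a set set \<Rightarrow> bool" where
  "NCI_hypergraph V E \<longleftrightarrow> simple_hypergraph V E \<and> nearly_ci E"

end

theory Submission
  imports Defs
begin

lemma card_pair_le: "card {a, b} \<le> 2"
  by (simp add: card_insert_le_m1)

lemma nbrs_sub:
  assumes H: "NCI_hypergraph V E"
    and eE: "e \<in> E" and c3: "card e \<ge> 3"
    and x: "x \<in> e" and y: "y \<in> e" and xy: "x \<noteq> y"
    and w: "{x, w} \<in> E"
  shows "{y, w} \<in> E"
proof (rule ccontr)
  assume nyw: "{y, w} \<notin> E"
  have sh: "simple_hypergraph V E" and nci: "nearly_ci E"
    using H by (auto simp: NCI_hypergraph_def)
  have clutter: "\<And>f g. f \<in> E \<Longrightarrow> g \<in> E \<Longrightarrow> \<not> g \<subset> f"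
    using sh by (auto simp: simple_hypergraph_def)
  have card2: "\<And>f. f \<in> E \<Longrightarrow> card f \<ge> 2"
    using sh by (auto simp: simple_hypergraph_def)
  have fin: "finite e" using c3 card.infinite by fastforce
  have xw: "x \<noteq> w" using card2[OF w] by (cases "x = w") auto
  have wne: "w \<notin> e"
  proof
    assume "w \<in> e"
    hence sub: "{x, w} \<subseteq> e" using x by auto
    have "{x, w} \<noteq> e" using c3 card_pair_le[of x w] by auto
    thus False using clutter[OF eE w] sub by auto
  qed
  have ysupp: "y \<in> ideal_support E" using y eE by (auto simp: ideal_support_def)
  have ci: "monomial_ci (subst_one E y)" using nci ysupp by (auto simp: nearly_ci_def)
  let ?F = "subst_one E y"
  have m1: "e - {y} \<in> minimal_sets ?F"
  proof -
    have a: "e - {y} \<in> ?F" unfolding subst_one_def using eE by simp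
    have b: "\<not> (\<exists>C\<in>?F. C \<subset> e - {y})"
    proof
      assume "\<exists>C\<in>?F. C \<subset> e - {y}"
      then obtain C where C: "C \<in> ?F" "C \<subset> e - {y}" by blast
      then obtain B where BE: "B \<in> E" and "C = B - {y}" unfolding subst_one_def by blast
      hence ps: "B - {y} \<subset> e - {y}" using C by simp
      have ps1: "B - {y} \<subseteq> e - {y}" and ps2: "B - {y} \<noteq> e - {y}"
        using ps by (simp_all add: psubset_eq)
      have "B \<subseteq> e" using ps1 y by auto
      moreover have "B \<noteq> e" using ps2 by auto
      ultimately have "B \<subset> e" by (simp add: psubset_eq)
      thus False using clutter[OF eE BE] by simp
    qed
    show ?thesis using a b unfolding minimal_sets_def by simp
  qed
  have m2: "{x, w} \<in> minimal_sets ?F"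
  proof -
    have eq: "{x, w} - {y} = {x, w}" using xy wne y by auto
    have a: "{x, w} \<in> ?F" unfolding subst_one_def using w eq by (metis image_eqI)
    have b: "\<not> (\<exists>C\<in>?F. C \<subset> {x, w})"
    proof
      assume "\<exists>C\<in>?F. C \<subset> {x, w}"
      then obtain C where C: "C \<in> ?F" "C \<subset> {x, w}" by blast
      then obtain B where BE: "B \<in> E" and "C = B - {y}" unfolding subst_one_def by blast
      hence ps: "B - {y} \<subset> {x, w}" using C by simp
      have cB: "card B \<ge> 2" using card2[OF BE] .
      have ps1: "B - {y} \<subseteq> {x, w}" and ps2: "B - {y} \<noteq> {x, w}"
        using ps by (simp_all add: psubset_eq)
      have cases: "B - {y} = {} \<or> B - {y} = {x} \<or> B - {y} = {w}"
      proof (cases "x \<in> B - {y}"; cases "w \<in> B - {y}")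
        assume "x \<in> B - {y}" "w \<in> B - {y}"
        hence "{x, w} \<subseteq> B - {y}" by simp
        hence "B - {y} = {x, w}" using ps1 by (rule subset_antisym[rotated])
        thus ?thesis using ps2 by simp
      next
        assume "x \<in> B - {y}" "w \<notin> B - {y}"
        hence "B - {y} = {x}" using ps1 by blast
        thus ?thesis by simp
      next
        assume "x \<notin> B - {y}" "w \<in> B - {y}"
        hence "B - {y} = {w}" using ps1 by blast
        thus ?thesis by simp
      next
        assume "x \<notin> B - {y}" "w \<notin> B - {y}"
        hence "B - {y} = {}" using ps1 by blast
        thus ?thesis by simp
      qed
      moreover have "B - {y} \<noteq> {}"
      proof
        assume "B - {y} = {}"
        hence "B \<subseteq> {y}" by blast
        hence "card B \<le> card {y}" by (intro card_mono) simp_all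
        thus False using cB by simp
      qed
      moreover have "B - {y} \<noteq> {x}"
      proof
        assume h: "B - {y} = {x}"
        hence Bxy: "B \<subseteq> {x, y}" by blast
        hence sub: "B \<subseteq> e" using x y by blast
        have "card B \<le> card {x, y}" using Bxy by (intro card_mono) simp_all
        hence "card B \<le> 2" using card_pair_le[of x y] by linarith
        hence "B \<noteq> e" using c3 by auto
        hence "B \<subset> e" using sub by (simp add: psubset_eq)
        thus False using clutter[OF eE BE] by simp
      qed
      moreover have "B - {y} \<noteq> {w}"
      proof
        assume h: "B - {y} = {w}"
        hence "B \<subseteq> {y, w}" by blast
        moreover have "B \<noteq> {w}" using cB by auto
        moreover have "w \<in> B" using h by blast
        ultimately have "B = {y, w}" using h by auto
        thus False using BE nyw by simp
      qed
      ultimately show False by blast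
    qed
    show ?thesis using a b unfolding minimal_sets_def by simp
  qed
  have ne: "e - {y} \<noteq> {x, w}"
  proof
    assume "e - {y} = {x, w}"
    hence "w \<in> e - {y}" by simp
    thus False using wne by simp
  qed
  have "pairwise disjnt (minimal_sets ?F)" using ci unfolding monomial_ci_def .
  hence "disjnt (e - {y}) {x, w}" using m1 m2 ne by (rule pairwiseD)
  moreover have "x \<in> e - {y}" using x xy by simp
  moreover have "x \<in> {x, w}" by simp
  ultimately show False unfolding disjnt_def by blast
qed

theorem lemma3p3:
  fixes V :: "'a set" and E :: "'a set set" and e :: "'a set"
  assumes "NCI_hypergraph V E"
    and "e \<in> E" and "card e \<ge> 3"
  shows "\<forall>x\<in>e. \<forall>y\<in>e. nbrs E x = nbrs E y"
proof (intro ballI)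
  fix x y assume x: "x \<in> e" and y: "y \<in> e"
  show "nbrs E x = nbrs E y"
  proof (cases "x = y")
    case True thus ?thesis by simp
  next
    case False
    show ?thesis unfolding nbrs_def
      using nbrs_sub[OF assms x y False] nbrs_sub[OF assms y x] False by auto
  qed
qed

end
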